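(* Let $k\ge 2$ be an integer and let $K:[0,1]^2\to(0,\infty)$ be continuous. Let $W$ be the linear operator on $C[0,1]$, $(Wf)(t)=\int_0^1K(t,u)f(u)\,du$, let $R_k:C_0^+[0,1]\to C_0^+[0,1]$ be $(R_kf)(t)=\left[\frac{(Wf)(t)}{(Wf)(0)}\right]^k$, and let $H_k$ be the Hammerstein operator $(H_kf)(t)=\int_0^1K(t,u)f^k(u)\,du$ on $C^+[0,1]$. Then the equation $R_kf=f$ has a solution $f\in C_0^+[0,1]$ if and only if there exist $\lambda>0$ and a nonzero $f\in C^+[0,1]$ with $H_kf=\lambda f$.
   Context: $C^+[0,1]=\{f\in C[0,1]: f(x)\ge 0 \text{ for all } x\}$ and $C_0^+[0,1]=C^+[0,1]\setminus\{0\}$ (the identically zero function removed). *)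

theory Defs
  imports "HOL-Analysis.Analysis"
begin

text \<open>Functions on [0,1] are represented as real-valued functions on the reals;
  only their values on {0..1} matter.\<close>

definition Cplus :: "(real \<Rightarrow> real) set" where
  "Cplus = {f. continuous_on {0..1} f \<and> (\<forall>x\<in>{0..1}. f x \<ge> 0)}"

definition Cplus0 :: "(real \<Rightarrow> real) set" where
  "Cplus0 = {f \<in> Cplus. \<exists>x\<in>{0..1}. f x \<noteq> 0}"

definition Wop :: "(real \<Rightarrow> real \<Rightarrow> real) \<Rightarrow> (real \<Rightarrow> real) \<Rightarrow> real \<Rightarrow> real" where
  "Wop K f t = integral {0..1} (\<lambda>u. K t u * f u)"

definition Rop :: "nat \<Rightarrow> (real \<Rightarrow> real \<Rightarrow> real) \<Rightarrow> (real \<Rightarrow> real) \<Rightarrow> real \<Rightarrow> real" where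
  "Rop k K f t = (Wop K f t / Wop K f 0) ^ k"

definition Hop :: "nat \<Rightarrow> (real \<Rightarrow> real \<Rightarrow> real) \<Rightarrow> (real \<Rightarrow> real) \<Rightarrow> real \<Rightarrow> real" where
  "Hop k K f t = integral {0..1} (\<lambda>u. K t u * f u ^ k)"

end

theory Submission
  imports Defs
begin

theorem lemma2p1:
  fixes k :: nat and K :: "real \<Rightarrow> real \<Rightarrow> real"
  assumes "k \<ge> 2"
    and "continuous_on ({0..1} \<times> {0..1}) (\<lambda>(t, u). K t u)"
    and "\<forall>t\<in>{0..1}. \<forall>u\<in>{0..1}. K t u > 0"
  shows "(\<exists>f\<in>Cplus0. \<forall>t\<in>{0..1}. Rop k K f t = f t) \<longleftrightarrow>
         (\<exists>c>0. \<exists>f\<in>Cplus0. \<forall>t\<in>{0..1}. Hop k K f t = c * f t)"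
proof
  have kpos: "k > 0" using assms(1) by simp
  have Kge: "\<forall>t\<in>{0..1}. \<forall>u\<in>{0..1}. K t u \<ge> 0" using assms(3) by (simp add: less_imp_le)
  have Wnn: "Wop K f t \<ge> 0" if "f \<in> Cplus" "t \<in> {0..1}" for f t
  proof (cases "(\<lambda>u. K t u * f u) integrable_on {0..1}")
    case True
    then show ?thesis unfolding Wop_def
      by (rule integral_nonneg) (use that Kge in \<open>auto simp: Cplus_def intro!: mult_nonneg_nonneg\<close>)
  next
    case False
    then show ?thesis by (simp add: Wop_def not_integrable_integral)
  qed
  assume "\<exists>f\<in>Cplus0. \<forall>t\<in>{0..1}. Rop k K f t = f t"
  then obtain f where f: "f \<in> Cplus0" and fixf: "\<forall>t\<in>{0..1}. Rop k K f t = f t" by blast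
  have fC: "f \<in> Cplus" using f by (simp add: Cplus0_def)
  obtain x where x: "x \<in> {0..1}" "f x \<noteq> 0" using f by (auto simp: Cplus0_def)
  define a where "a = Wop K f 0"
  have "a \<noteq> 0"
  proof
    assume "a = 0"
    then have "Rop k K f x = 0" using kpos by (simp add: Rop_def a_def)
    then show False using fixf x by auto
  qed
  moreover have "a \<ge> 0" unfolding a_def by (rule Wnn[OF fC]) auto
  ultimately have apos: "a > 0" by simp
  define g where "g = (\<lambda>t. root k (f t))"
  have fnn: "\<And>t. t \<in> {0..1} \<Longrightarrow> f t \<ge> 0" using fC by (auto simp: Cplus_def)
  have geq: "g t = Wop K f t / a" if "t \<in> {0..1}" for t
  proof -
    have "f t = (Wop K f t / a) ^ k" using fixf that by (simp add: Rop_def a_def)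
    moreover have "Wop K f t / a \<ge> 0" using Wnn[OF fC that] apos by simp
    ultimately show ?thesis unfolding g_def using kpos real_root_pos_unique by metis
  qed
  have gC: "g \<in> Cplus0"
  proof -
    have "continuous_on {0..1} g" unfolding g_def using fC
      by (auto simp: Cplus_def intro!: continuous_intros)
    moreover have "\<forall>t\<in>{0..1}. g t \<ge> 0" using fnn by (auto simp: g_def intro!: real_root_ge_zero)
    moreover have "g x \<noteq> 0" using x kpos fnn by (simp add: g_def)
    ultimately show ?thesis using x by (auto simp: Cplus0_def Cplus_def)
  qed
  have "\<forall>t\<in>{0..1}. Hop k K g t = a * g t"
  proof
    fix t :: real assume t: "t \<in> {0..1}"
    have "Hop k K g t = Wop K f t" unfolding Hop_def Wop_def
      by (rule integral_cong) (use fnn kpos in \<open>simp add: g_def\<close>)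
    then show "Hop k K g t = a * g t" using geq[OF t] apos by simp
  qed
  then show "\<exists>c>0. \<exists>f\<in>Cplus0. \<forall>t\<in>{0..1}. Hop k K f t = c * f t" using apos gC by blast
next
  have kpos: "k > 0" using assms(1) by simp
  have Kge: "\<forall>t\<in>{0..1}. \<forall>u\<in>{0..1}. K t u \<ge> 0" using assms(3) by (simp add: less_imp_le)
  assume "\<exists>c>0. \<exists>f\<in>Cplus0. \<forall>t\<in>{0..1}. Hop k K f t = c * f t"
  then obtain c g where c: "c > 0" and g: "g \<in> Cplus0" and eig: "\<forall>t\<in>{0..1}. Hop k K g t = c * g t" by blast
  obtain x where x: "x \<in> {0..1}" "g x \<noteq> 0" using g by (auto simp: Cplus0_def)
  have gcont: "continuous_on {0..1} g" and gnn: "\<And>t. t \<in> {0..1} \<Longrightarrow> g t \<ge> 0"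
    using g by (auto simp: Cplus0_def Cplus_def)
  have K0: "continuous_on {0..1} (\<lambda>u. K 0 u)"
    using continuous_on_compose2[OF assms(2), of "{0..1}" "\<lambda>u. (0::real, u)"]
    by (simp add: image_subset_iff continuous_on_Pair[OF continuous_on_const continuous_on_id])
  have g0: "g 0 > 0"
  proof (rule ccontr)
    assume "\<not> g 0 > 0"
    then have "g 0 = 0" using gnn[of 0] by simp
    then have "integral {0..1} (\<lambda>u. K 0 u * g u ^ k) = 0" using eig by (simp add: Hop_def)
    then have "\<forall>u\<in>{0..1}. K 0 u * g u ^ k = 0"
      by (subst (asm) integral_eq_0_iff)
        (use K0 gcont gnn Kge in \<open>auto intro!: continuous_intros mult_nonneg_nonneg\<close>)
    then have "K 0 x * g x ^ k = 0" using x by auto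
    then show False using x assms(3) by (metis atLeastAtMost_iff less_irrefl mult_eq_0_iff power_eq_0_iff order_refl zero_le_one)
  qed
  define f where "f = (\<lambda>t. (g t / g 0) ^ k)"
  have fC: "f \<in> Cplus0"
  proof -
    have "continuous_on {0..1} f" unfolding f_def using gcont g0
      by (auto intro!: continuous_intros)
    moreover have "\<forall>t\<in>{0..1}. f t \<ge> 0" using gnn g0 by (simp add: f_def)
    moreover have "f 0 \<noteq> 0" using g0 by (simp add: f_def)
    ultimately show ?thesis by (auto simp: Cplus0_def Cplus_def)
  qed
  have Wf: "Wop K f t = c * g t / g 0 ^ k" if "t \<in> {0..1}" for t
  proof -
    have "Wop K f t = integral {0..1} (\<lambda>u. K t u * g u ^ k / g 0 ^ k)"
      unfolding Wop_def f_def by (simp add: power_divide)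
    also have "\<dots> = Hop k K g t / g 0 ^ k" by (simp add: Hop_def)
    finally show ?thesis using eig that by simp
  qed
  have "\<forall>t\<in>{0..1}. Rop k K f t = f t"
  proof
    fix t :: real assume t: "t \<in> {0..1}"
    have "Wop K f t / Wop K f 0 = g t / g 0"
      using c g0 by (simp add: Wf[OF t] Wf[of 0] field_simps)
    then show "Rop k K f t = f t" by (simp add: Rop_def f_def)
  qed
  then show "\<exists>f\<in>Cplus0. \<forall>t\<in>{0..1}. Rop k K f t = f t" using fC by blast
qed

end
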